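(* Let $T\in\mathbb{C}^{l\times l}$ and let $\lambda_1,\lambda_2,\lambda_3$ be three distinct eigenvalues of $T$. Then for all $\gamma=(\gamma_{12},\gamma_{13},\gamma_{23})\in\mathbb{C}^3$, \[ \operatorname{rank}\begin{bmatrix} T-\lambda_1 I_l & \gamma_{12} I_l & \gamma_{13} I_l\\ 0 & T-\lambda_2 I_l & \gamma_{23} I_l\\ 0&0&T-\lambda_3 I_l\end{bmatrix}\le 3l-3 , \] equivalently $s_{3l-2}$ of this matrix equals $0$.
   Context: $s_j(\cdot)$ denotes the $j$-th largest singular value of a matrix ($s_1\ge s_2\ge\cdots$). *)

theory Defs
  imports "Jordan_Normal_Form.Char_Poly" "Jordan_Normal_Form.DL_Rank"
begin

definition block3_mat :: "nat \<Rightarrow> (nat \<Rightarrow> nat \<Rightarrow> 'a mat) \<Rightarrow> 'a mat" where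
  "block3_mat l B = mat (3*l) (3*l) (\<lambda>(i,j). B (i div l) (j div l) $$ (i mod l, j mod l))"

end

theory Submission
  imports Defs
begin
context vec_space begin
lemma sp_add: "G \<subseteq> carrier_vec n \<Longrightarrow> v \<in> span G \<Longrightarrow> w \<in> span G \<Longrightarrow> v + w \<in> span G"
  using submodule.m_closed[OF span_is_submodule[of G]] by (simp add: module_vec_simps)
lemma sp_smult: "G \<subseteq> carrier_vec n \<Longrightarrow> v \<in> span G \<Longrightarrow> c \<cdot>\<^sub>v v \<in> span G"
  using submodule.smult_closed[OF span_is_submodule[of G]] by (simp add: module_vec_simps class_ring_simps)
lemma sp_zero: "G \<subseteq> carrier_vec n \<Longrightarrow> 0\<^sub>v n \<in> span G"
  using submodule.zero_closed[OF span_is_submodule[of G]] by (simp add: module_vec_simps)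
lemma sp_carrier: "G \<subseteq> carrier_vec n \<Longrightarrow> v \<in> span G \<Longrightarrow> v \<in> carrier_vec n"
  using submodule.subset[OF span_is_submodule[of G]] by (auto simp add: module_vec_simps)

lemma sp_sum_cols:
  assumes M: "M \<in> carrier_mat n nc" and G: "G \<subseteq> carrier_vec n" and fin: "finite I"
    and I: "\<And>i. i \<in> I \<Longrightarrow> i < nc \<and> col M i \<in> span G"
  shows "vec n (\<lambda>r. \<Sum>i\<in>I. x$i * M$$(r,i)) \<in> span G"
  using fin I
proof (induction I rule: finite_induct)
  case empty
  then show ?case using sp_zero[OF G] by (simp add: zero_vec_def)
next
  case (insert a I)
  have "vec n (\<lambda>r. \<Sum>i\<in>insert a I. x$i * M$$(r,i)) = (x$a) \<cdot>\<^sub>v col M a + vec n (\<lambda>r. \<Sum>i\<in>I. x$i * M$$(r,i))"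
    using insert M by (auto simp: sum.insert_remove)
  then show ?case using insert sp_add[OF G] sp_smult[OF G] by auto
qed

lemma key_col:
  assumes M: "M \<in> carrier_mat n nc" and x: "x \<in> carrier_vec nc" and Mx: "M *\<^sub>v x = 0\<^sub>v n"
    and j: "j < nc" and xj: "x$j \<noteq> 0" and G: "G \<subseteq> carrier_vec n"
    and oth: "\<And>i. i < nc \<Longrightarrow> i \<noteq> j \<Longrightarrow> x$i \<noteq> 0 \<Longrightarrow> col M i \<in> span G"
  shows "col M j \<in> span G"
proof -
  define I where "I = {i. i < nc \<and> i \<noteq> j \<and> x$i \<noteq> 0}"
  have w: "vec n (\<lambda>r. \<Sum>i\<in>I. x$i * M$$(r,i)) \<in> span G"
    by (rule sp_sum_cols[OF M G]) (auto simp: I_def oth)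
  have "col M j = (- 1 / x$j) \<cdot>\<^sub>v vec n (\<lambda>r. \<Sum>i\<in>I. x$i * M$$(r,i))"
  proof (rule eq_vecI)
    show "dim_vec (col M j) = dim_vec ((- 1 / x$j) \<cdot>\<^sub>v vec n (\<lambda>r. \<Sum>i\<in>I. x$i * M$$(r,i)))"
      using M by simp
    fix r assume r: "r < dim_vec ((- 1 / x$j) \<cdot>\<^sub>v vec n (\<lambda>r. \<Sum>i\<in>I. x$i * M$$(r,i)))"
    hence r: "r < n" by simp
    have "0 = (M *\<^sub>v x) $ r" using Mx r by simp
    also have "\<dots> = (\<Sum>i<nc. M$$(r,i) * x$i)"
      using M x r by (auto simp: mult_mat_vec_def scalar_prod_def lessThan_atLeast0)
    also have "\<dots> = (\<Sum>i\<in>insert j I. x$i * M$$(r,i))"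
      by (rule sum.mono_neutral_cong_right) (auto simp: I_def j mult.commute)
    also have "\<dots> = x$j * M$$(r,j) + (\<Sum>i\<in>I. x$i * M$$(r,i))"
      by (subst sum.insert) (auto simp: I_def)
    finally have e: "0 = x$j * M$$(r,j) + (\<Sum>i\<in>I. x$i * M$$(r,i))" .
    hence "x$j * M$$(r,j) = - (\<Sum>i\<in>I. x$i * M$$(r,i))" by (simp add: eq_neg_iff_add_eq_0)
    hence "M$$(r,j) = (- 1 / x$j) * (\<Sum>i\<in>I. x$i * M$$(r,i))"
      using xj by (simp add: field_simps)
    then show "col M j $ r = ((- 1 / x$j) \<cdot>\<^sub>v vec n (\<lambda>r. \<Sum>i\<in>I. x$i * M$$(r,i))) $ r"
      using M r j by simp
  qed
  then show ?thesis using w sp_smult[OF G] by metis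
qed

lemma rank_le_gen:
  assumes M: "M \<in> carrier_mat n nc" and GM: "G \<subseteq> set (cols M)"
    and sp: "\<And>c. c \<in> set (cols M) \<Longrightarrow> c \<in> span G"
  shows "rank M \<le> card G"
proof -
  have C: "set (cols M) \<subseteq> carrier_vec n" using M cols_dim by blast
  have G: "G \<subseteq> carrier_vec n" using GM C by blast
  have "span G \<subseteq> span (set (cols M))" using GM span_is_monotone by metis
  moreover have "span (set (cols M)) \<subseteq> span G"
    using span_is_subset[OF _ span_is_submodule[OF G]] sp by blast
  ultimately have eq: "span (set (cols M)) = span G" by blast
  have vs: "vectorspace class_ring (vs (span G))"
    using G span_is_subspace subspace_is_vs by simp
  have "G \<subseteq> span G" using G in_own_span by simp
  have gen: "LinearCombinations.module.span class_ring (vs (span G)) G = carrier (vs (span G))"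
    using span_li_not_depend(1)[OF \<open>G \<subseteq> span G\<close> span_is_submodule[OF G]] by auto
  have fG: "finite G" using GM finite_subset by blast
  have "vectorspace.dim class_ring (vs (span G)) \<le> card G"
    using vectorspace.gen_ge_dim[OF vs fG _ gen] \<open>G \<subseteq> span G\<close> by simp
  then show ?thesis unfolding rank_def eq .
qed
end

lemma sum_3l: "(\<Sum>j<3*(l::nat). f j) = (\<Sum>s<l. f s) + (\<Sum>s<l. f (l+s)) + (\<Sum>s<l. f (2*l+s))"
proof -
  have a: "{..<3*l} = {..<l} \<union> {l..<2*l} \<union> {2*l..<3*l}" by auto
  have "(\<Sum>j<3*l. f j) = (\<Sum>j<l. f j) + (\<Sum>j\<in>{l..<2*l}. f j) + (\<Sum>j\<in>{2*l..<3*l}. f j)"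
    unfolding a by (subst sum.union_disjoint, auto)+
  moreover have "(\<Sum>j\<in>{l..<2*l}. f j) = (\<Sum>s<l. f (l+s))"
    using sum.shift_bounds_nat_ivl[of f 0 l l] by (simp add: add.commute lessThan_atLeast0 mult_2)
  moreover have "(\<Sum>j\<in>{2*l..<3*l}. f j) = (\<Sum>s<l. f (2*l+s))"
    using sum.shift_bounds_nat_ivl[of f 0 "2*l" l] by (simp add: add.commute lessThan_atLeast0)
  ultimately show ?thesis by simp
qed

lemma sumT:
  fixes T :: "complex mat"
  assumes T: "T \<in> carrier_mat l l" and v: "v \<in> carrier_vec l" and Tv: "T *\<^sub>v v = lam \<cdot>\<^sub>v v" and r: "r < l"
  shows "(\<Sum>s<l. (T - mu \<cdot>\<^sub>m 1\<^sub>m l)$$(r,s) * (k * v$s)) = (lam - mu) * k * v$r"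
proof -
  have "(\<Sum>s<l. (T - mu \<cdot>\<^sub>m 1\<^sub>m l)$$(r,s) * (k * v$s))
      = (\<Sum>s<l. k * (T$$(r,s) * v$s) - (if s = r then k * mu * v$s else 0))"
    by (rule sum.cong) (use T r in \<open>auto simp: algebra_simps\<close>)
  also have "\<dots> = (\<Sum>s<l. k * (T$$(r,s) * v$s)) - (\<Sum>s<l. (if s = r then k * mu * v$s else 0))"
    by (rule sum_subtractf)
  also have "(\<Sum>s<l. (if s = r then k * mu * v$s else 0)) = k * mu * v$r"
    using r by (simp add: sum.delta)
  also have "(\<Sum>s<l. k * (T$$(r,s) * v$s)) = k * (T *\<^sub>v v) $ r"
    using T v r by (simp add: mult_mat_vec_def scalar_prod_def sum_distrib_left lessThan_atLeast0 mult.commute)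
  also have "\<dots> = k * lam * v $ r" using Tv r v by simp
  finally show ?thesis by (simp add: algebra_simps)
qed

lemma sumI:
  fixes g :: complex
  assumes r: "r < l"
  shows "(\<Sum>s<l. (g \<cdot>\<^sub>m 1\<^sub>m l)$$(r,s) * (k * v$s)) = g * k * v$r"
proof -
  have "(\<Sum>s<l. (g \<cdot>\<^sub>m 1\<^sub>m l)$$(r,s) * (k * v$s)) = (\<Sum>s<l. (if s = r then g * k * v$s else 0))"
    by (rule sum.cong) (use r in \<open>auto simp: algebra_simps\<close>)
  also have "\<dots> = g * k * v$r" using r by (simp add: sum.delta)
  finally show ?thesis .
qed

lemma sum0:
  assumes r: "r < l"
  shows "(\<Sum>s<l. (0\<^sub>m l l :: complex mat)$$(r,s) * (k * v$s)) = 0"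
  using r by simp


lemma Mbv:
  fixes T :: "complex mat"
  assumes T: "T \<in> carrier_mat l l" and v: "v \<in> carrier_vec l" and Tv: "T *\<^sub>v v = lam \<cdot>\<^sub>v v"
    and hB: "B = (\<lambda>p q.
              if p = 0 \<and> q = 0 then T - mu1 \<cdot>\<^sub>m 1\<^sub>m l
              else if p = 0 \<and> q = 1 then g12 \<cdot>\<^sub>m 1\<^sub>m l
              else if p = 0 \<and> q = 2 then g13 \<cdot>\<^sub>m 1\<^sub>m l
              else if p = 1 \<and> q = 1 then T - mu2 \<cdot>\<^sub>m 1\<^sub>m l
              else if p = 1 \<and> q = 2 then g23 \<cdot>\<^sub>m 1\<^sub>m l
              else if p = 2 \<and> q = 2 then T - mu3 \<cdot>\<^sub>m 1\<^sub>m l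
              else 0\<^sub>m l l)"
    and i: "i < 3*l"
  shows "(block3_mat l B *\<^sub>v vec (3*l) (\<lambda>j. (if j div l = 0 then a else if j div l = 1 then b else c) * v$(j mod l))) $ i
    = (if i div l = 0 then (lam-mu1)*a + g12*b + g13*c else if i div l = 1 then (lam-mu2)*b + g23*c else (lam-mu3)*c) * v$(i mod l)"
proof -
  define x where "x = vec (3*l) (\<lambda>j. (if j div l = 0 then a else if j div l = 1 then b else c) * v$(j mod l))"
  define p where "p = i div l"
  define r where "r = i mod l"
  have l: "l > 0" using i by simp
  have r: "r < l" using l by (simp add: r_def)
  have p: "p < 3" using i by (simp add: p_def less_mult_imp_div_less mult.commute)
  have "(block3_mat l B *\<^sub>v x) $ i = (\<Sum>j<3*l. B p (j div l) $$ (r, j mod l) * x$j)"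
    using i by (simp add: block3_mat_def mult_mat_vec_def scalar_prod_def lessThan_atLeast0 p_def r_def x_def)
  also have "\<dots> = (\<Sum>s<l. B p 0 $$ (r,s) * (a * v$s)) + (\<Sum>s<l. B p 1 $$ (r,s) * (b * v$s))
       + (\<Sum>s<l. B p 2 $$ (r,s) * (c * v$s))"
    unfolding sum_3l using l by (simp add: x_def)
  also have "\<dots> = (if p = 0 then (lam-mu1)*a + g12*b + g13*c else if p = 1 then (lam-mu2)*b + g23*c else (lam-mu3)*c) * v$r"
  proof -
    have "p = 0 \<or> p = 1 \<or> p = 2" using p by auto
    moreover
    { assume p0: "p = 0"
      have "B 0 0 = T - mu1 \<cdot>\<^sub>m 1\<^sub>m l" "B 0 1 = g12 \<cdot>\<^sub>m 1\<^sub>m l" "B 0 2 = g13 \<cdot>\<^sub>m 1\<^sub>m l"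
        using hB p0 by auto
      note bb = this
      have ?thesis using p0 by (simp only: p0 bb sumT[OF T v Tv r] sumI[OF r]) (simp add: algebra_simps) }
    moreover
    { assume p1: "p = 1"
      have "B 1 0 = 0\<^sub>m l l" "B 1 1 = T - mu2 \<cdot>\<^sub>m 1\<^sub>m l" "B 1 2 = g23 \<cdot>\<^sub>m 1\<^sub>m l"
        using hB p1 by auto
      note bb = this
      have ?thesis using p1 by (simp only: p1 bb sumT[OF T v Tv r] sumI[OF r] sum0[OF r]) (simp add: algebra_simps) }
    moreover
    { assume p2: "p = 2"
      have "B 2 0 = 0\<^sub>m l l" "B 2 1 = 0\<^sub>m l l" "B 2 2 = T - mu3 \<cdot>\<^sub>m 1\<^sub>m l"
        using hB p2 by auto
      note bb = this
      have ?thesis using p2 by (simp only: p2 bb sumT[OF T v Tv r] sumI[OF r] sum0[OF r]) (simp add: algebra_simps) }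
    ultimately show ?thesis by blast
  qed
  finally show ?thesis by (simp add: x_def p_def r_def)
qed


lemma ev_obtain:
  assumes T: "T \<in> carrier_mat l l" and e: "eigenvalue T mu"
  obtains v p where "v \<in> carrier_vec l" "T *\<^sub>v v = mu \<cdot>\<^sub>v v" "p < l" "v $ p \<noteq> 0"
proof -
  obtain v where v: "eigenvector T v mu" using e unfolding eigenvalue_def by blast
  hence vc: "v \<in> carrier_vec l" and nz: "v \<noteq> 0\<^sub>v l" and Tv: "T *\<^sub>v v = mu \<cdot>\<^sub>v v"
    using T unfolding eigenvector_def by auto
  have "\<exists>p<l. v $ p \<noteq> 0"
  proof (rule ccontr)
    assume "\<not> ?thesis"
    hence "v = 0\<^sub>v l" using vc by (intro eq_vecI) auto
    thus False using nz by simp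
  qed
  then show ?thesis using that vc Tv by blast
qed

theorem mainTheorem1:
  fixes T :: "complex mat" and l :: nat and mu1 mu2 mu3 g12 g13 g23 :: complex
  assumes "T \<in> carrier_mat l l"
    and "eigenvalue T mu1" and "eigenvalue T mu2" and "eigenvalue T mu3"
    and "mu1 \<noteq> mu2" and "mu1 \<noteq> mu3" and "mu2 \<noteq> mu3"
  shows "vec_space.rank (3*l)
           (block3_mat l (\<lambda>p q.
              if p = 0 \<and> q = 0 then T - mu1 \<cdot>\<^sub>m 1\<^sub>m l
              else if p = 0 \<and> q = 1 then g12 \<cdot>\<^sub>m 1\<^sub>m l
              else if p = 0 \<and> q = 2 then g13 \<cdot>\<^sub>m 1\<^sub>m l
              else if p = 1 \<and> q = 1 then T - mu2 \<cdot>\<^sub>m 1\<^sub>m l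
              else if p = 1 \<and> q = 2 then g23 \<cdot>\<^sub>m 1\<^sub>m l
              else if p = 2 \<and> q = 2 then T - mu3 \<cdot>\<^sub>m 1\<^sub>m l
              else 0\<^sub>m l l))
         \<le> 3*l - 3"
    (is "vec_space.rank _ (block3_mat l ?B) \<le> _")
proof -
  note T = assms(1)
  obtain v1 p1 where v1: "v1 \<in> carrier_vec l" "T *\<^sub>v v1 = mu1 \<cdot>\<^sub>v v1" "p1 < l" "v1 $ p1 \<noteq> 0"
    using ev_obtain[OF T assms(2)] by blast
  obtain v2 p2 where v2: "v2 \<in> carrier_vec l" "T *\<^sub>v v2 = mu2 \<cdot>\<^sub>v v2" "p2 < l" "v2 $ p2 \<noteq> 0"
    using ev_obtain[OF T assms(3)] by blast
  obtain v3 p3 where v3: "v3 \<in> carrier_vec l" "T *\<^sub>v v3 = mu3 \<cdot>\<^sub>v v3" "p3 < l" "v3 $ p3 \<noteq> 0"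
    using ev_obtain[OF T assms(4)] by blast
  define M where "M = block3_mat l ?B"
  have M: "M \<in> carrier_mat (3*l) (3*l)" by (simp add: M_def block3_mat_def)
  have l: "l > 0" using v1 by simp
  define bv where "bv = (\<lambda>a b c (v :: complex vec). vec (3*l) (\<lambda>j. (if j div l = 0 then a else if j div l = 1 then b else c) * v$(j mod l)))"
  have Mbv': "M *\<^sub>v bv a b c v = 0\<^sub>v (3*l)"
    if "v \<in> carrier_vec l" "T *\<^sub>v v = lam \<cdot>\<^sub>v v" "(lam-mu1)*a + g12*b + g13*c = 0"
      "(lam-mu2)*b + g23*c = 0" "(lam-mu3)*c = 0" for v lam a b c
  proof (rule eq_vecI)
    fix i assume "i < dim_vec (0\<^sub>v (3*l) :: complex vec)"
    hence i: "i < 3*l" by simp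
    show "(M *\<^sub>v bv a b c v) $ i = 0\<^sub>v (3*l) $ i"
      unfolding M_def bv_def Mbv[OF T that(1,2) refl i] using that i by simp
  qed (use M in \<open>simp add: bv_def\<close>)
  define a2 where "a2 = - g12 / (mu2 - mu1)"
  define b3 where "b3 = - g23 / (mu3 - mu2)"
  define a3 where "a3 = - (g12 * b3 + g13) / (mu3 - mu1)"
  define x1 where "x1 = bv 1 0 0 v1"
  define x2 where "x2 = bv a2 1 0 v2"
  define x3 where "x3 = bv a3 b3 1 v3"
  have k1: "M *\<^sub>v x1 = 0\<^sub>v (3*l)" unfolding x1_def by (rule Mbv'[OF v1(1,2)]) auto
  have k2: "M *\<^sub>v x2 = 0\<^sub>v (3*l)" unfolding x2_def
    by (rule Mbv'[OF v2(1,2)]) (use assms(5) in \<open>auto simp: a2_def field_simps\<close>)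
  have k3: "M *\<^sub>v x3 = 0\<^sub>v (3*l)" unfolding x3_def
  proof (rule Mbv'[OF v3(1,2)])
    have n1: "mu3 - mu1 \<noteq> 0" "mu3 - mu2 \<noteq> 0" using assms(6,7) by auto
    have e1: "(mu3 - mu1) * a3 = - (g12 * b3 + g13)" using n1 by (simp add: a3_def)
    have e2: "(mu3 - mu2) * b3 = - g23" using n1 by (simp add: b3_def)
    show "(mu3 - mu1) * a3 + g12 * b3 + g13 * 1 = 0" using e1 by simp
    show "(mu3 - mu2) * b3 + g23 * 1 = 0" using e2 by simp
  qed simp
  interpret vs: vec_space "TYPE(complex)" "3*l" .
  define J where "J = {p1, l+p2, 2*l+p3}"
  define G where "G = col M ` ({..<3*l} - J)"
  have GM: "G \<subseteq> set (cols M)" using M by (auto simp: G_def cols_def)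
  have Gc: "G \<subseteq> carrier_vec (3*l)" using M by (auto simp: G_def)
  have inG: "col M i \<in> vs.span G" if "i < 3*l" "i \<notin> J" for i
    using vs.span_mem[of G "col M i"] Gc that by (auto simp: G_def)
  have x1c: "x1 \<in> carrier_vec (3*l)" "x2 \<in> carrier_vec (3*l)" "x3 \<in> carrier_vec (3*l)"
    by (auto simp: x1_def x2_def x3_def bv_def)
  have c1: "col M p1 \<in> vs.span G"
  proof (rule vs.key_col[OF M x1c(1) k1 _ _ Gc])
    show "p1 < 3*l" using v1 by simp
    show "x1 $ p1 \<noteq> 0" using v1 l by (simp add: x1_def bv_def)
    fix i assume i: "i < 3*l" "i \<noteq> p1" "x1 $ i \<noteq> 0"
    hence "i div l = 0" using i by (auto simp: x1_def bv_def split: if_splits)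
    hence "i < l" using l by (simp add: div_eq_0_iff)
    hence "i \<notin> J" using i by (auto simp: J_def)
    thus "col M i \<in> vs.span G" using inG i by blast
  qed
  have c2: "col M (l+p2) \<in> vs.span G"
  proof (rule vs.key_col[OF M x1c(2) k2 _ _ Gc])
    show "l+p2 < 3*l" using v2 by simp
    show "x2 $ (l+p2) \<noteq> 0" using v2 l by (simp add: x2_def bv_def)
    fix i assume i: "i < 3*l" "i \<noteq> l+p2" "x2 $ i \<noteq> 0"
    hence "i div l \<noteq> 2" by (auto simp: x2_def bv_def split: if_splits)
    moreover have "i div l < 3" using i(1) l by (simp add: div_less_iff_less_mult)
    ultimately have "i div l < 2" by linarith
    hence "i < 2*l" using l by (simp add: div_less_iff_less_mult mult.commute)
    show "col M i \<in> vs.span G"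
    proof (cases "i = p1")
      case True thus ?thesis using c1 by blast
    next
      case False hence "i \<notin> J" using i(2) \<open>i < 2*l\<close> by (auto simp: J_def)
      thus ?thesis using inG i(1) by blast
    qed
  qed
  have c3: "col M (2*l+p3) \<in> vs.span G"
  proof (rule vs.key_col[OF M x1c(3) k3 _ _ Gc])
    show "2*l+p3 < 3*l" using v3 by simp
    show "x3 $ (2*l+p3) \<noteq> 0" using v3 l by (simp add: x3_def bv_def)
    fix i assume i: "i < 3*l" "i \<noteq> 2*l+p3" "x3 $ i \<noteq> 0"
    show "col M i \<in> vs.span G"
    proof (cases "i = p1 \<or> i = l+p2")
      case True thus ?thesis using c1 c2 by blast
    next
      case False hence "i \<notin> J" using i(2) by (simp add: J_def)
      thus ?thesis using inG i(1) by blast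
    qed
  qed
  have all: "c \<in> vs.span G" if cM: "c \<in> set (cols M)" for c
  proof -
    obtain i where i: "i < 3*l" "c = col M i" using cM M by (auto simp: cols_def)
    show ?thesis using inG[OF i(1)] c1 c2 c3 i by (auto simp: J_def)
  qed
  have "vs.rank M \<le> card G" by (rule vs.rank_le_gen[OF M GM all])
  also have "card G \<le> card ({..<3*l} - J)" unfolding G_def by (rule card_image_le) simp
  also have "card ({..<3*l} - J) = 3*l - 3"
  proof -
    have "J \<subseteq> {..<3*l}" using v1 v2 v3 by (auto simp: J_def)
    moreover have "card J = 3" using v1 v2 v3 by (auto simp: J_def)
    ultimately show ?thesis by (simp add: card_Diff_subset finite_subset)
  qed
  finally show ?thesis unfolding M_def .
qed

end
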